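(* Let $A,B,C$ be type expressions. (1) If $\bullet A\cong B\to C$, then $A\cong C\cong\top$. (2) If $\bullet A\simeq B\to C$, then either (a) $A\simeq C\simeq\top$, or (b) there exist type expressions $D,E$ with $A\simeq D\to E$, $\bullet D\simeq B$ and $\bullet E\simeq C$.
   Context: Type expressions: fix a countably infinite set of type variables $X,Y,Z,\dots$. Pseudo type expressions are generated by $A::=X\mid A\to A\mid \bullet A\mid \mu X.A$ ($\mu$ binds $X$; $\alpha$-convertible expressions are identified; $\to$ associates to the right; $\bullet$ binds tighter than $\to$, which binds tighter than $\mu$). $A[B/X]$ denotes capture-avoiding substitution. $\top$ abbreviates $\mu X.\bullet X$, and $\bullet^n A$ denotes $A$ prefixed by $n$ copies of $\bullet$. The tail $t(A)$ is defined by $t(X)=X$, $t(A\to B)=t(B)$, $t(\bullet A)=\bullet t(A)$, $t(\mu X.A)=\mu X.t(A)$; it always has the form $\bullet^{m_0}\mu X_1.\bullet^{m_1}\mu X_2.\cdots\mu X_n.\bullet^{m_n}Y$. $A$ is a $\top$-variant iff $Y=X_i$ for some $1\le i\le n$ with $X_i\notin\{X_{i+1},\dots,X_n\}$ and $m_i+\dots+m_n\ge 1$. $A$ is proper in $X$ iff: a variable $Y$ is proper in $X$ iff $Y\neq X$; $\bullet A$ is always proper in $X$; $A\to B$ is proper in $X$ iff both $A,B$ are proper in $X$ or $B$ is a $\top$-variant; for $Y\ne X$, $\mu Y.A$ is proper in $X$ iff $A$ is proper in $X$ or $\mu Y.A$ is a $\top$-variant. Type expressions are the least set of pseudo type expressions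 containing all type variables, closed under $\to$ and $\bullet$, and containing $\mu X.A$ whenever it contains $A$ and $A$ is proper in $X$. Equality: $\cong$ is the least relation on type expressions such that: $A\cong A$; $A\cong B$ implies $B\cong A$; $A\cong B$ and $B\cong C$ imply $A\cong C$; $A\cong B$ implies $\bullet A\cong\bullet B$; $A\cong C$ and $B\cong D$ imply $A\to B\cong C\to D$; $A\to\top\cong\top$; $\mu X.A\cong A[\mu X.A/X]$; and if $A\cong C[A/X]$ with $C$ proper in $X$, then $A\cong\mu X.C$. $\simeq$ is the least relation satisfying the same closure conditions and additionally $\bullet(A\to B)\simeq\bullet A\to\bullet B$. *)

theory Defs
  imports Main
begin

text \<open>Pseudo type expressions, with alpha-equivalence built in via de Bruijn indices.
  Var j is the variable bound by the (j+1)-th enclosing Mu, or, if there are fewer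
  enclosing binders, a free variable.\<close>
datatype ty = Var nat | Arr ty ty | Later ty | Mu ty

fun lift :: "nat \<Rightarrow> ty \<Rightarrow> ty" where
  "lift k (Var j) = (if j < k then Var j else Var (Suc j))"
| "lift k (Arr A B) = Arr (lift k A) (lift k B)"
| "lift k (Later A) = Later (lift k A)"
| "lift k (Mu A) = Mu (lift (Suc k) A)"

fun subst :: "nat \<Rightarrow> ty \<Rightarrow> ty \<Rightarrow> ty" where
  "subst k s (Var j) = (if j < k then Var j else if j = k then s else Var (j - 1))"
| "subst k s (Arr A B) = Arr (subst k s A) (subst k s B)"
| "subst k s (Later A) = Later (subst k s A)"
| "subst k s (Mu A) = Mu (subst (Suc k) (lift 0 s) A)"

definition top :: ty where "top = Mu (Later (Var 0))"

text \<open>Walk along the tail t(A). The list g records, for each Mu binder met so far in the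
  tail (innermost first), whether at least one bullet occurs after it.\<close>
fun topv :: "bool list \<Rightarrow> ty \<Rightarrow> bool" where
  "topv g (Var j) = (j < length g \<and> g ! j)"
| "topv g (Arr A B) = topv g B"
| "topv g (Later A) = topv (map (\<lambda>_. True) g) A"
| "topv g (Mu A) = topv (False # g) A"

definition top_variant :: "ty \<Rightarrow> bool" where
  "top_variant A = topv [] A"

fun proper :: "nat \<Rightarrow> ty \<Rightarrow> bool" where
  "proper k (Var j) = (j \<noteq> k)"
| "proper k (Later A) = True"
| "proper k (Arr A B) = ((proper k A \<and> proper k B) \<or> top_variant B)"
| "proper k (Mu A) = (proper (Suc k) A \<or> top_variant (Mu A))"

text \<open>Type expressions.\<close>
fun wf :: "ty \<Rightarrow> bool" where
  "wf (Var j) = True"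
| "wf (Arr A B) = (wf A \<and> wf B)"
| "wf (Later A) = wf A"
| "wf (Mu A) = (wf A \<and> proper 0 A)"

inductive eqT :: "ty \<Rightarrow> ty \<Rightarrow> bool" where
  refl: "wf A \<Longrightarrow> eqT A A"
| sym: "eqT A B \<Longrightarrow> eqT B A"
| trans: "eqT A B \<Longrightarrow> eqT B C \<Longrightarrow> eqT A C"
| later: "eqT A B \<Longrightarrow> eqT (Later A) (Later B)"
| arr: "eqT A C \<Longrightarrow> eqT B D \<Longrightarrow> eqT (Arr A B) (Arr C D)"
| arr_top: "wf A \<Longrightarrow> eqT (Arr A top) top"
| unfold: "wf (Mu A) \<Longrightarrow> eqT (Mu A) (subst 0 (Mu A) A)"
| fixpt: "wf A \<Longrightarrow> wf C \<Longrightarrow> proper 0 C \<Longrightarrow> eqT A (subst 0 A C) \<Longrightarrow> eqT A (Mu C)"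

inductive eqS :: "ty \<Rightarrow> ty \<Rightarrow> bool" where
  refl: "wf A \<Longrightarrow> eqS A A"
| sym: "eqS A B \<Longrightarrow> eqS B A"
| trans: "eqS A B \<Longrightarrow> eqS B C \<Longrightarrow> eqS A C"
| later: "eqS A B \<Longrightarrow> eqS (Later A) (Later B)"
| arr: "eqS A C \<Longrightarrow> eqS B D \<Longrightarrow> eqS (Arr A B) (Arr C D)"
| arr_top: "wf A \<Longrightarrow> eqS (Arr A top) top"
| unfold: "wf (Mu A) \<Longrightarrow> eqS (Mu A) (subst 0 (Mu A) A)"
| fixpt: "wf A \<Longrightarrow> wf C \<Longrightarrow> proper 0 C \<Longrightarrow> eqS A (subst 0 A C) \<Longrightarrow> eqS A (Mu C)"
| later_arr: "wf A \<Longrightarrow> wf B \<Longrightarrow> eqS (Later (Arr A B)) (Arr (Later A) (Later B))"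

end

theory Submission imports Defs begin

lemma lift_lift:
    "i < k + 1 \<Longrightarrow> lift (Suc k) (lift i t) = lift i (lift k t)"
  by (induct t arbitrary: i k) auto

lemma lift_subst [simp]:
    "j < i + 1 \<Longrightarrow> lift i (subst j s t) = subst j (lift i s) (lift (i + 1) t)"
  by (induct t arbitrary: i j s)
    (simp_all add: diff_Suc lift_lift split: nat.split)

lemma lift_subst_lt:
    "i < j + 1 \<Longrightarrow> lift i (subst j s t) = subst (j+1) (lift i s) (lift i t)"
  by (induct t arbitrary: i j s) (auto simp: lift_lift)

lemma subst_lift [simp]:
    "subst k s (lift k t) = t"
  by (induct t arbitrary: k s) simp_all

lemma subst_subst:
    "i < j + 1 \<Longrightarrow> subst i (subst j v u) (subst (Suc j) (lift i v) t) = subst j v (subst i u t)"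
  by (induct t arbitrary: i j u v)
    (simp_all add: diff_Suc lift_lift [symmetric] lift_subst_lt
      split: nat.split)

lemma lift_top[simp]: "lift k top = top" by (simp add: top_def)
lemma subst_top[simp]: "subst k s top = top" by (simp add: top_def)
lemma proper_top[simp]: "proper k top" by (simp add: top_def)
lemma wf_top[simp]: "wf top" by (simp add: top_def)

lemma topv_lift: "length g \<le> k \<Longrightarrow> topv g (lift k X) = topv g X"
  by (induct X arbitrary: g k) auto

lemma topv_subst: "topv g X \<Longrightarrow> length g \<le> k \<Longrightarrow> topv g (subst k s X)"
  by (induct X arbitrary: g k s) auto

lemma tv_lift[simp]: "top_variant (lift k X) = top_variant X"
  by (simp add: top_variant_def topv_lift)
lemma tv_subst: "top_variant X \<Longrightarrow> top_variant (subst k s X)"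
  by (simp add: top_variant_def topv_subst)

lemma tv_Mu_lift[simp]: "top_variant (Mu (lift (Suc i) A)) = top_variant (Mu A)"
  by (simp add: top_variant_def topv_lift)

lemma proper_lift_lt: "proper j A \<Longrightarrow> j < i \<Longrightarrow> proper j (lift i A)"
  by (induct A arbitrary: i j) auto
lemma proper_lift_ge: "proper j A \<Longrightarrow> i \<le> j \<Longrightarrow> proper (Suc j) (lift i A)"
  by (induct A arbitrary: i j) auto
lemma proper_lift_same: "proper j (lift j A)"
  by (induct A arbitrary: j) auto
lemma wf_lift: "wf A \<Longrightarrow> wf (lift i A)"
  by (induct A arbitrary: i) (auto intro: proper_lift_lt)

lemma proper_subst: "proper j X \<Longrightarrow> j < k \<Longrightarrow> (\<forall>i<k. proper i s) \<Longrightarrow> proper j (subst k s X)"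
proof (induct X arbitrary: j k s)
  case (Mu A)
  have "\<forall>i<Suc k. proper i (lift 0 s)"
    using Mu.prems(3) by (auto simp: less_Suc_eq_0_disj proper_lift_same intro: proper_lift_ge)
  then show ?case using Mu by (auto dest: tv_subst[where k=k and s=s])
qed (auto intro: tv_subst)

lemma wf_subst: "wf X \<Longrightarrow> wf s \<Longrightarrow> (\<forall>i<k. proper i s) \<Longrightarrow> wf (subst k s X)"
proof (induct X arbitrary: k s)
  case (Mu A)
  have "\<forall>i<Suc k. proper i (lift 0 s)"
    using Mu.prems(3) by (auto simp: less_Suc_eq_0_disj proper_lift_same intro: proper_lift_ge)
  then show ?case using Mu by (auto intro: proper_subst wf_lift)
qed auto

lemma wf_subst0: "wf X \<Longrightarrow> wf s \<Longrightarrow> wf (subst 0 s X)"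
  by (simp add: wf_subst)


datatype tr = Fin nat nat | Inf

fun addT :: "nat \<Rightarrow> tr \<Rightarrow> tr" where
  "addT n (Fin m j) = Fin (n+m) j" | "addT n Inf = Inf"

fun tsem :: "ty \<Rightarrow> tr" where
  "tsem (Var j) = Fin 0 j"
| "tsem (Arr A B) = tsem B"
| "tsem (Later A) = addT 1 (tsem A)"
| "tsem (Mu A) = (case tsem A of Fin n 0 \<Rightarrow> Inf | Fin n (Suc j) \<Rightarrow> Fin n j | Inf \<Rightarrow> Inf)"

fun liftT :: "nat \<Rightarrow> tr \<Rightarrow> tr" where
  "liftT k (Fin n j) = Fin n (if j < k then j else Suc j)" | "liftT k Inf = Inf"

fun substT :: "nat \<Rightarrow> tr \<Rightarrow> tr \<Rightarrow> tr" where
  "substT k t (Fin n j) = (if j < k then Fin n j else if j = k then addT n t else Fin n (j - 1))"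
| "substT k t Inf = Inf"

lemma addT_liftT[simp]: "addT n (liftT k t) = liftT k (addT n t)" by (cases t) auto
lemma addT_addT[simp]: "addT n (addT m t) = addT (n+m) t" by (cases t) auto
lemma addT_0[simp]: "addT 0 t = t" by (cases t) auto
lemma addT_substT[simp]: "addT n (substT k u t) = substT k u (addT n t)" by (cases t) auto

lemma tsem_lift[simp]: "tsem (lift k X) = liftT k (tsem X)"
  by (induct X arbitrary: k) (auto split: tr.split nat.split)

lemma tsem_subst: "tsem (subst k s X) = substT k (tsem s) (tsem X)"
proof (induct X arbitrary: k s)
  case (Mu A)
  then show ?case
    by (cases "tsem A"; cases "tsem s") (auto split: nat.split)
qed auto

lemma topv_tsem: "topv g B \<Longrightarrow> tsem B = Inf \<or> (\<exists>n j. tsem B = Fin n j \<and> j < length g \<and> (0 < n \<or> g ! j))"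
proof (induct B arbitrary: g)
  case (Later A)
  then show ?case by (cases "tsem A") fastforce+
next
  case (Mu A)
  from Mu.hyps[of "False # g"] Mu.prems show ?case
    by (auto split: tr.split nat.split simp: nth_Cons')
qed auto

lemma tv_Inf: "top_variant B \<Longrightarrow> tsem B = Inf"
  using topv_tsem[of "[]" B] by (auto simp: top_variant_def)

lemma proper_tsem: "proper k C \<Longrightarrow> tsem C \<noteq> Fin 0 k"
proof (induct C arbitrary: k)
  case (Later A) then show ?case by (cases "tsem A") auto
next
  case (Mu A) then show ?case using tv_Inf[of "Mu A"]
    by (auto split: tr.split nat.split)
qed (auto dest: tv_Inf)

fun hv :: "ty \<Rightarrow> nat \<Rightarrow> bool" where
  "hv (Var j) k = (j = k)" | "hv (Arr A B) k = False" | "hv (Later A) k = False" | "hv (Mu A) k = hv A (Suc k)"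
fun isA :: "ty \<Rightarrow> bool" where
  "isA (Var j) = False" | "isA (Arr A B) = True" | "isA (Later A) = False" | "isA (Mu A) = isA A"
fun hvB :: "ty \<Rightarrow> nat \<Rightarrow> bool" where
  "hvB (Var j) k = (j = k)" | "hvB (Arr A B) k = False" | "hvB (Later A) k = hvB A k" | "hvB (Mu A) k = hvB A (Suc k)"
fun isB :: "ty \<Rightarrow> bool" where
  "isB (Var j) = False" | "isB (Arr A B) = True" | "isB (Later A) = isB A" | "isB (Mu A) = isB A"

lemma isA_lift[simp]: "isA (lift k X) = isA X" by (induct X arbitrary: k) auto
lemma isB_lift[simp]: "isB (lift k X) = isB X" by (induct X arbitrary: k) auto
lemma isA_subst: "isA (subst k s X) = (isA X \<or> (hv X k \<and> isA s))" by (induct X arbitrary: k s) auto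
lemma isB_subst: "isB (subst k s X) = (isB X \<or> (hvB X k \<and> isB s))" by (induct X arbitrary: k s) auto
lemma hv_tsem: "hv X k \<Longrightarrow> \<exists>n. tsem X = Fin n k" by (induct X arbitrary: k) fastforce+
lemma hvB_tsem: "hvB X k \<Longrightarrow> \<exists>n. tsem X = Fin n k" by (induct X arbitrary: k) fastforce+

fun dom :: "ty \<Rightarrow> ty" where
  "dom (Var j) = Var j" | "dom (Arr A B) = A" | "dom (Later A) = Later (dom A)" | "dom (Mu A) = subst 0 (Mu A) (dom A)"
fun cod :: "ty \<Rightarrow> ty" where
  "cod (Var j) = Var j" | "cod (Arr A B) = B" | "cod (Later A) = Later (cod A)" | "cod (Mu A) = subst 0 (Mu A) (cod A)"

lemma dom_subst: "isB X \<Longrightarrow> dom (subst k s X) = subst k s (dom X)"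
  by (induct X arbitrary: k s) (auto simp: subst_subst[of 0, simplified, symmetric])
lemma cod_subst: "isB X \<Longrightarrow> cod (subst k s X) = subst k s (cod X)"
  by (induct X arbitrary: k s) (auto simp: subst_subst[of 0, simplified, symmetric])

lemma wf_dom: "wf X \<Longrightarrow> wf (dom X) \<and> wf (cod X)"
  by (induct X) (auto intro: wf_subst0)

lemma eqS_wf: "eqS X Y \<Longrightarrow> wf X \<and> wf Y"
  by (induct rule: eqS.induct) (auto intro: wf_subst0)
lemma eqT_wf: "eqT X Y \<Longrightarrow> wf X \<and> wf Y"
  by (induct rule: eqT.induct) (auto intro: wf_subst0)
lemma eqT_eqS: "eqT X Y \<Longrightarrow> eqS X Y"
  by (induct rule: eqT.induct) (auto intro: eqS.intros)

lemma eqS_lift: "eqS X Y \<Longrightarrow> eqS (lift i X) (lift i Y)"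
proof (induct arbitrary: i rule: eqS.induct)
  case (unfold A)
  then show ?case using eqS.unfold[of "lift (Suc i) A"] wf_lift[OF unfold(1), of i] by simp
next
  case (fixpt A C)
  then show ?case using eqS.fixpt[of "lift i A" "lift (Suc i) C"]
    by (simp add: wf_lift proper_lift_lt)
qed (auto intro: eqS.intros wf_lift)

lemma eqS_subst: "eqS X Y \<Longrightarrow> wf s \<Longrightarrow> \<forall>j<k. proper j s \<Longrightarrow> eqS (subst k s X) (subst k s Y)"
proof (induct arbitrary: k s rule: eqS.induct)
  case (unfold A)
  have w: "wf (subst k s (Mu A))" using unfold by (intro wf_subst) auto
  then show ?case using eqS.unfold[of "subst (Suc k) (lift 0 s) A"]
    by (simp add: subst_subst[of 0, simplified, symmetric])
next
  case (fixpt A C)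
  have p: "\<forall>i<Suc k. proper i (lift 0 s)"
    using fixpt.prems(2) by (auto simp: less_Suc_eq_0_disj proper_lift_same intro: proper_lift_ge)
  have "wf (subst (Suc k) (lift 0 s) C)" using fixpt p by (intro wf_subst wf_lift) auto
  moreover have "proper 0 (subst (Suc k) (lift 0 s) C)" using fixpt p by (intro proper_subst) auto
  moreover have "wf (subst k s A)" using fixpt by (intro wf_subst) auto
  ultimately show ?case using fixpt eqS.fixpt[of "subst k s A" "subst (Suc k) (lift 0 s) C"]
    by (simp add: subst_subst[of 0, simplified, symmetric])
next
  case (trans A B C) then show ?case by (meson eqS.trans)
qed (auto intro: eqS.intros wf_subst)

lemma eqS_Mu: "eqS X Y \<Longrightarrow> proper 0 X \<Longrightarrow> proper 0 Y \<Longrightarrow> eqS (Mu X) (Mu Y)"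
proof -
  assume e: "eqS X Y" and p: "proper 0 X" "proper 0 Y"
  have w: "wf X" "wf Y" using eqS_wf[OF e] by auto
  have "eqS (Mu X) (subst 0 (Mu X) X)" using w p by (intro eqS.unfold) auto
  moreover have "eqS (subst 0 (Mu X) X) (subst 0 (Mu X) Y)" using w p by (intro eqS_subst e) auto
  ultimately have "eqS (Mu X) (subst 0 (Mu X) Y)" by (rule eqS.trans)
  then show ?thesis using w p by (intro eqS.fixpt) auto
qed

lemma eqS_subst2: "wf T \<Longrightarrow> eqS A A' \<Longrightarrow> (\<forall>i<k. proper i A) \<Longrightarrow> (\<forall>i<k. proper i A') \<Longrightarrow> eqS (subst k A T) (subst k A' T)"
proof (induct T arbitrary: k A A')
  case (Var j)
  then show ?case using eqS_wf[OF Var(2)] by (auto intro: eqS.intros)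
next
  case (Mu T)
  have p: "\<forall>i<Suc k. proper i (lift 0 A)" "\<forall>i<Suc k. proper i (lift 0 A')"
    using Mu.prems by (auto simp: less_Suc_eq_0_disj proper_lift_same intro: proper_lift_ge)
  have "eqS (subst (Suc k) (lift 0 A) T) (subst (Suc k) (lift 0 A') T)"
    using Mu p by (auto intro: eqS_lift)
  then show ?case using Mu p by (auto intro!: eqS_Mu proper_subst)
qed (auto intro: eqS.intros)

lemma top_later: "eqT top (Later top)"
proof -
  have "eqT (Mu (Later (Var 0))) (subst 0 (Mu (Later (Var 0))) (Later (Var 0)))"
    by (rule eqT.unfold) simp
  then show ?thesis by (simp add: top_def)
qed

fun mc :: "ty \<Rightarrow> nat" where
  "mc (Var j) = 0" | "mc (Arr A B) = mc A + mc B" | "mc (Later A) = mc A"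
| "mc (Mu A) = (if Mu A = top then 0 else Suc (mc A))"

lemma mc_subst: "mc (subst k top X) \<le> mc X"
  by (induct X arbitrary: k) (auto simp: top_def intro!: add_mono)

lemma tsem_top[simp]: "tsem top = Inf" by (simp add: top_def)

lemma inf_top_aux:
  assumes IH: "\<And>Y. mc Y < M \<Longrightarrow> wf Y \<Longrightarrow> (tsem Y = Inf \<longrightarrow> eqT Y top) \<and> (\<forall>k. (tsem Y = Inf \<or> (\<exists>n. tsem Y = Fin n k)) \<longrightarrow> eqT (subst k top Y) top)"
  shows "mc X \<le> M \<Longrightarrow> wf X \<Longrightarrow> (tsem X = Inf \<longrightarrow> eqT X top) \<and> (\<forall>k. (tsem X = Inf \<or> (\<exists>n. tsem X = Fin n k)) \<longrightarrow> eqT (subst k top X) top)"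
proof (induct X)
  case (Var j)
  then show ?case by (auto intro: eqT.refl)
next
  case (Arr A B)
  have a: "eqT (Arr A top) top" "eqT (Arr (subst k top A) top) top" for k
    using Arr by (auto intro!: eqT.arr_top wf_subst)
  have b: "eqT A A" "eqT (subst k top A) (subst k top A)" for k
    using Arr by (auto intro!: eqT.refl wf_subst)
  show ?case using Arr a b by simp (meson eqT.arr eqT.trans)
next
  case (Later A)
  have l: "tsem (Later A) = Inf \<Longrightarrow> tsem A = Inf" "tsem (Later A) = Fin n k \<Longrightarrow> tsem A = Inf \<or> (\<exists>n. tsem A = Fin n k)" for n k
    by (cases "tsem A"; auto)+
  show ?case using Later l top_later by simp (meson eqT.later eqT.trans eqT.sym)
next
  case (Mu A)
  show ?case
  proof (cases "Mu A = top")
    case True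
    then show ?thesis by (auto intro: eqT.refl)
  next
    case False
    have mA: "mc A < M" "mc A \<le> M" using Mu.prems False by auto
    have wA: "wf A" "proper 0 A" using Mu.prems by auto
    have part1: "eqT (Mu A) top" if "tsem (Mu A) = Inf"
    proof -
      have "tsem A = Inf \<or> (\<exists>n. tsem A = Fin n 0)" using that by (auto split: tr.splits nat.splits)
      then have "eqT (subst 0 top A) top" using Mu.hyps mA wA by blast
      then have "eqT top (Mu A)" using wA by (intro eqT.fixpt) (auto intro: eqT.sym)
      then show ?thesis by (rule eqT.sym)
    qed
    have part2: "eqT (subst k top (Mu A)) top" if "tsem (Mu A) = Inf \<or> (\<exists>n. tsem (Mu A) = Fin n k)" for k
    proof -
      define B where "B = subst 0 top A"
      define A' where "A' = subst (Suc k) top A"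
      have wB: "wf B" unfolding B_def using wA by (intro wf_subst0) auto
      have mB: "mc B < M" unfolding B_def using mc_subst[of 0 A] mA by simp
      have tB: "tsem B = Inf \<or> (\<exists>n. tsem B = Fin n k)"
        using that unfolding B_def by (auto simp: tsem_subst split: tr.splits nat.splits)
      have "eqT (subst k top B) top" using IH[OF mB wB] tB by blast
      moreover have "subst k top B = subst 0 top A'"
        unfolding B_def A'_def using subst_subst[of 0 k top top A] by simp
      ultimately have e: "eqT (subst 0 top A') top" by simp
      have "wf A'" unfolding A'_def using wA by (intro wf_subst) auto
      moreover have "proper 0 A'" unfolding A'_def using wA by (intro proper_subst) auto
      ultimately have "eqT top (Mu A')" using e by (intro eqT.fixpt) (auto intro: eqT.sym)
      then show ?thesis unfolding A'_def by (simp add: eqT.sym)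
    qed
    show ?thesis using part1 part2 by blast
  qed
qed

lemma inf_top: "wf X \<Longrightarrow> tsem X = Inf \<Longrightarrow> eqT X top"
proof -
  have "\<And>X. wf X \<Longrightarrow> (tsem X = Inf \<longrightarrow> eqT X top) \<and> (\<forall>k. (tsem X = Inf \<or> (\<exists>n. tsem X = Fin n k)) \<longrightarrow> eqT (subst k top X) top)"
  proof -
    fix X
    show "wf X \<Longrightarrow> ?thesis X"
    proof (induct "mc X" arbitrary: X rule: less_induct)
      case less
      show ?case using inf_top_aux[of "mc X" X] less by blast
    qed
  qed
  then show "wf X \<Longrightarrow> tsem X = Inf \<Longrightarrow> eqT X top" by blast
qed

lemma fix_tsem: "proper 0 C \<Longrightarrow> tsem A = substT 0 (tsem A) (tsem C) \<Longrightarrow>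
   tsem A = tsem (Mu C) \<and> (tsem A \<noteq> Inf \<longrightarrow> (\<exists>n j. tsem C = Fin n (Suc j)))"
  using proper_tsem[of 0 C]
  by (cases "tsem C"; cases "tsem A") (auto split: nat.splits if_splits)

lemma eqT_inv: "eqT X Y \<Longrightarrow> tsem X = tsem Y \<and> (tsem X \<noteq> Inf \<longrightarrow> isA X = isA Y)"
proof (induct rule: eqT.induct)
  case (unfold A)
  then show ?case by (auto simp: tsem_subst isA_subst split: tr.splits nat.splits)
next
  case (fixpt A C)
  have t: "tsem A = substT 0 (tsem A) (tsem C)" using fixpt by (simp add: tsem_subst)
  from fix_tsem[OF fixpt(3) t] obtain  h: "tsem A = tsem (Mu C)" "tsem A \<noteq> Inf \<longrightarrow> (\<exists>n j. tsem C = Fin n (Suc j))" by blast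
  have "tsem A \<noteq> Inf \<Longrightarrow> \<not> hv C 0" using h hv_tsem[of C 0] by auto
  then show ?case using h fixpt(5) by (auto simp: isA_subst)
qed auto

lemma eqS_inv: "eqS X Y \<Longrightarrow> tsem X = tsem Y \<and> (tsem X \<noteq> Inf \<longrightarrow> isB X = isB Y \<and>
   (isB X \<longrightarrow> eqS (dom X) (dom Y) \<and> eqS (cod X) (cod Y)))"
proof (induct rule: eqS.induct)
  case (refl A)
  then show ?case using wf_dom[OF refl] by (auto intro: eqS.refl)
next
  case (sym A B) then show ?case by (auto intro: eqS.sym)
next
  case (trans A B C) then show ?case by (auto intro: eqS.trans)
next
  case (later A B) then show ?case by (auto intro: eqS.later)
next
  case (unfold A)
  have "isB A \<Longrightarrow> dom (subst 0 (Mu A) A) = dom (Mu A) \<and> cod (subst 0 (Mu A) A) = cod (Mu A)"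
    by (simp add: dom_subst cod_subst)
  moreover have "wf (dom (Mu A)) \<and> wf (cod (Mu A))" using wf_dom[OF unfold] by simp
  ultimately show ?case
    by (auto simp: tsem_subst isB_subst split: tr.splits nat.splits intro: eqS.refl)
next
  case (fixpt A C)
  have t: "tsem A = substT 0 (tsem A) (tsem C)" using fixpt by (simp add: tsem_subst)
  from fix_tsem[OF fixpt(3) t] obtain  h: "tsem A = tsem (Mu C)" "tsem A \<noteq> Inf \<longrightarrow> (\<exists>n j. tsem C = Fin n (Suc j))" by blast
  have nh: "tsem A \<noteq> Inf \<Longrightarrow> \<not> hvB C 0" using h hvB_tsem[of C 0] by auto
  have AM: "eqS A (Mu C)" using fixpt by (intro eqS.fixpt) auto
  have wC: "wf (dom C)" "wf (cod C)" using wf_dom[OF fixpt(2)] by auto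
  have d: "eqS (subst 0 A (dom C)) (subst 0 (Mu C) (dom C))" "eqS (subst 0 A (cod C)) (subst 0 (Mu C) (cod C))"
    using wC AM by (auto intro: eqS_subst2)
  show ?case
  proof (intro conjI impI)
    show "tsem A = tsem (Mu C)" by (rule h(1))
    assume ni: "tsem A \<noteq> Inf"
    show "isB A = isB (Mu C)" using fixpt(5) ni nh by (auto simp: isB_subst)
    assume iA: "isB A"
    then have iC: "isB C" using fixpt(5) ni nh by (auto simp: isB_subst)
    have "eqS (dom A) (subst 0 A (dom C))" "eqS (cod A) (subst 0 A (cod C))"
      using fixpt(5) ni iA iC by (auto simp: dom_subst cod_subst)
    then show "eqS (dom A) (dom (Mu C))" "eqS (cod A) (cod (Mu C))"
      using d by (auto intro: eqS.trans)
  qed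
next
  case (later_arr A B)
  then show ?case by (auto intro: eqS.refl)
qed (auto)

lemma arr_decomp: "wf X \<Longrightarrow> isB X \<Longrightarrow> eqS X (Arr (dom X) (cod X))"
proof (induct X)
  case (Arr A B) then show ?case by (auto intro: eqS.refl)
next
  case (Later Y)
  have w: "wf (dom Y)" "wf (cod Y)" using wf_dom[of Y] Later by auto
  have "eqS (Later Y) (Later (Arr (dom Y) (cod Y)))" using Later by (auto intro: eqS.later)
  then show ?case using w eqS.later_arr[OF w] by (auto intro: eqS.trans)
next
  case (Mu Y)
  have "eqS (Mu Y) (subst 0 (Mu Y) Y)" using Mu by (intro eqS.unfold)
  moreover have "eqS (subst 0 (Mu Y) Y) (subst 0 (Mu Y) (Arr (dom Y) (cod Y)))"
    using Mu by (intro eqS_subst) auto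
  ultimately show ?case by (auto intro: eqS.trans)
qed auto

theorem proposition4:
  assumes "wf A" and "wf B" and "wf C"
  shows "(eqT (Later A) (Arr B C) \<longrightarrow> eqT A C \<and> eqT C top)
    \<and> (eqS (Later A) (Arr B C) \<longrightarrow>
         (eqS A C \<and> eqS C top)
       \<or> (\<exists>D E. wf D \<and> wf E \<and> eqS A (Arr D E) \<and> eqS (Later D) B \<and> eqS (Later E) C))"
proof (rule conjI; rule impI)
  assume e: "eqT (Later A) (Arr B C)"
  from eqT_inv[OF e] have "tsem A = Inf \<and> tsem C = Inf"
    by (cases "tsem A") auto
  then have "eqT A top" "eqT C top" using assms inf_top by auto
  then show "eqT A C \<and> eqT C top" by (auto intro: eqT.trans eqT.sym)
next
  assume e: "eqS (Later A) (Arr B C)"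
  show "(eqS A C \<and> eqS C top)
       \<or> (\<exists>D E. wf D \<and> wf E \<and> eqS A (Arr D E) \<and> eqS (Later D) B \<and> eqS (Later E) C)"
  proof (cases "tsem A = Inf")
    case True
    with eqS_inv[OF e] have "tsem C = Inf" by simp
    then have "eqS A top" "eqS C top" using True assms inf_top eqT_eqS by auto
    then show ?thesis by (auto intro: eqS.trans eqS.sym)
  next
    case False
    then have ni: "tsem (Later A) \<noteq> Inf" by (cases "tsem A") auto
    with eqS_inv[OF e] have i: "isB A" and d: "eqS (Later (dom A)) B" "eqS (Later (cod A)) C" by auto
    have "eqS A (Arr (dom A) (cod A))" using arr_decomp assms i by auto
    then show ?thesis using d wf_dom[OF assms(1)] by blast
  qed
qed

end
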